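(* For every $\gamma>0$ and every $E>0$ there exists a density operator $\varrho$ with $0<\operatorname{tr}[\varrho H^2]\le E$ such that $$\left\|\widetilde\varrho_{-}-\frac{{\cal N}_{-}(\gamma)[\varrho]}{\operatorname{tr}\big[{\cal N}_{-}(\gamma)[\varrho]\big]}\right\|_1\ \ge\ 1.$$
   Context: ${\cal H}$ is a separable Hilbert space with orthonormal (Fock) basis $\{|n\rangle\}_{n=0}^{\infty}$; $a=\sum_{n\ge1}\sqrt{n}\,|n-1\rangle\langle n|$, $a^{\dagger}=\sum_{n\ge0}\sqrt{n+1}\,|n+1\rangle\langle n|$, $H=a^{\dagger}a$. For a density operator $\varrho$, $\operatorname{tr}[\varrho H^k]=\sum_n n^k\langle n|\varrho|n\rangle$. Ideal photon subtraction output: $\widetilde\varrho_{-}=a\varrho a^{\dagger}/\operatorname{tr}[a\varrho a^{\dagger}]$ (defined when $0<\operatorname{tr}[\varrho H]<\infty$). For $\gamma>0$, the approximate photon subtraction operation is ${\cal N}_{-}(\gamma)[\varrho]=(e^{2\gamma}-1)\,a e^{-\gamma H}\varrho e^{-\gamma H}a^{\dagger}$. $\|X\|_1=\operatorname{tr}\sqrt{X^{\dagger}X}$. *)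

theory Defs
  imports Complex_Main "HOL-Library.Extended_Nonnegative_Real"
begin

text \<open>Operators on the Fock space are represented by their matrix elements in the
Fock basis: X m n = <m|X|n>.\<close>

type_synonym fop = "nat \<Rightarrow> nat \<Rightarrow> complex"

text \<open>Boundedness, tested on finitely supported vectors (which are dense).\<close>
definition bounded_op :: "fop \<Rightarrow> bool" where
  "bounded_op X \<longleftrightarrow> (\<exists>C. \<forall>F M (v::nat \<Rightarrow> complex). finite F \<longrightarrow> finite M \<longrightarrow>
      (\<Sum>m\<in>M. (cmod (\<Sum>n\<in>F. X m n * v n))\<^sup>2) \<le> C * (\<Sum>n\<in>F. (cmod (v n))\<^sup>2))"

definition positive_op :: "fop \<Rightarrow> bool" where
  "positive_op X \<longleftrightarrow> (\<forall>F (v::nat \<Rightarrow> complex). finite F \<longrightarrow>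
      Im (\<Sum>m\<in>F. \<Sum>n\<in>F. cnj (v m) * X m n * v n) = 0 \<and>
      0 \<le> Re (\<Sum>m\<in>F. \<Sum>n\<in>F. cnj (v m) * X m n * v n))"

definition mmult :: "fop \<Rightarrow> fop \<Rightarrow> fop" where
  "mmult A B = (\<lambda>m n. \<Sum>k. A m k * B k n)"

definition adj :: "fop \<Rightarrow> fop" where
  "adj X = (\<lambda>m n. cnj (X n m))"

definition op_scale :: "complex \<Rightarrow> fop \<Rightarrow> fop" where
  "op_scale c X = (\<lambda>m n. c * X m n)"

definition op_diff :: "fop \<Rightarrow> fop \<Rightarrow> fop" where
  "op_diff X Y = (\<lambda>m n. X m n - Y m n)"

definition op_trace :: "fop \<Rightarrow> complex" where
  "op_trace X = (\<Sum>n. X n n)"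

definition ann :: fop where
  "ann = (\<lambda>m n. if n = Suc m then complex_of_real (sqrt (real n)) else 0)"

definition cre :: fop where
  "cre = adj ann"

definition exp_mH :: "real \<Rightarrow> fop" where
  "exp_mH g = (\<lambda>m n. if m = n then complex_of_real (exp (- g * real n)) else 0)"

definition density_op :: "fop \<Rightarrow> bool" where
  "density_op \<rho> \<longleftrightarrow> bounded_op \<rho> \<and> positive_op \<rho> \<and>
     summable (\<lambda>n. Re (\<rho> n n)) \<and> op_trace \<rho> = 1"

definition tr_H_pow :: "fop \<Rightarrow> nat \<Rightarrow> real" where
  "tr_H_pow \<rho> k = (\<Sum>n. real n ^ k * Re (\<rho> n n))"

definition photon_sub :: "fop \<Rightarrow> fop" where
  "photon_sub \<rho> = op_scale (1 / op_trace (mmult (mmult ann \<rho>) cre)) (mmult (mmult ann \<rho>) cre)"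

definition approx_sub :: "real \<Rightarrow> fop \<Rightarrow> fop" where
  "approx_sub g \<rho> = op_scale (complex_of_real (exp (2 * g) - 1))
     (mmult (mmult (mmult (mmult ann (exp_mH g)) \<rho>) (exp_mH g)) cre)"

definition op_sqrt :: "fop \<Rightarrow> fop" where
  "op_sqrt P = (THE S. bounded_op S \<and> positive_op S \<and> mmult S S = P)"

definition trace_norm :: "fop \<Rightarrow> ennreal" where
  "trace_norm X = (\<Sum>n. ennreal (Re (op_sqrt (mmult (adj X) X) n n)))"

end

theory Submission
  imports Defs
begin

definition cdiag :: "(nat \<Rightarrow> real) \<Rightarrow> fop" where
  "cdiag f = (\<lambda>m n. if m = n then complex_of_real (f n) else 0)"

lemma mmult_cdiag: "mmult A (cdiag f) = (\<lambda>m n. A m n * complex_of_real (f n))"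
proof (intro ext)
  fix m n
  have "(\<lambda>k. A m k * cdiag f k n) = (\<lambda>k. if k = n then A m k * complex_of_real (f n) else 0)"
    by (auto simp: cdiag_def)
  moreover have "(\<lambda>k. if k = n then A m k * complex_of_real (f n) else 0) sums (A m n * complex_of_real (f n))"
    using sums_single[of n "\<lambda>k. A m k * complex_of_real (f n)"] by simp
  ultimately show "mmult A (cdiag f) m n = A m n * complex_of_real (f n)"
    unfolding mmult_def by (simp add: sums_iff)
qed

lemma mmult_cre: "mmult A cre = (\<lambda>m n. A m (Suc n) * complex_of_real (sqrt (real (Suc n))))"
proof (intro ext)
  fix m n
  have "(\<lambda>k. A m k * cre k n) = (\<lambda>k. if k = Suc n then A m k * complex_of_real (sqrt (real (Suc n))) else 0)"
    by (auto simp: cre_def adj_def ann_def)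
  moreover have "(\<lambda>k. if k = Suc n then A m k * complex_of_real (sqrt (real (Suc n))) else 0) sums (A m (Suc n) * complex_of_real (sqrt (real (Suc n))))"
    using sums_single[of "Suc n" "\<lambda>k. A m k * complex_of_real (sqrt (real (Suc n)))"] by simp
  ultimately show "mmult A cre m n = A m (Suc n) * complex_of_real (sqrt (real (Suc n)))"
    unfolding mmult_def by (simp add: sums_iff)
qed

lemma bounded_cdiag:
  assumes "\<And>n. \<bar>f n\<bar> \<le> B"
  shows "bounded_op (cdiag f)"
  unfolding bounded_op_def
proof (intro exI allI impI)
  fix F M :: "nat set" and v :: "nat \<Rightarrow> complex"
  assume F: "finite F" and M: "finite M"
  have B0: "0 \<le> B" using assms[of 0] by simp
  have "(\<Sum>m\<in>M. (cmod (\<Sum>n\<in>F. cdiag f m n * v n))\<^sup>2)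
        = (\<Sum>m\<in>M. if m \<in> F then (cmod (complex_of_real (f m) * v m))\<^sup>2 else 0)"
  proof (rule sum.cong)
    fix m assume "m \<in> M"
    have "(\<Sum>n\<in>F. cdiag f m n * v n) = (\<Sum>n\<in>F. if m = n then complex_of_real (f m) * v m else 0)"
      by (intro sum.cong) (auto simp: cdiag_def)
    also have "\<dots> = (if m \<in> F then complex_of_real (f m) * v m else 0)"
      using F by simp
    finally show "(cmod (\<Sum>n\<in>F. cdiag f m n * v n))\<^sup>2 = (if m \<in> F then (cmod (complex_of_real (f m) * v m))\<^sup>2 else 0)"
      by simp
  qed simp
  also have "\<dots> = (\<Sum>m\<in>M \<inter> F. (cmod (complex_of_real (f m) * v m))\<^sup>2)"
    using M by (simp add: sum.inter_restrict)
  also have "\<dots> \<le> (\<Sum>m\<in>M \<inter> F. B\<^sup>2 * (cmod (v m))\<^sup>2)"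
  proof (rule sum_mono)
    fix m
    have "\<bar>f m\<bar>\<^sup>2 \<le> B\<^sup>2" using power_mono[OF assms[of m] abs_ge_zero, of 2] by simp
    then show "(cmod (complex_of_real (f m) * v m))\<^sup>2 \<le> B\<^sup>2 * (cmod (v m))\<^sup>2"
      by (simp add: norm_mult power_mult_distrib mult_right_mono)
  qed
  also have "\<dots> \<le> (\<Sum>m\<in>F. B\<^sup>2 * (cmod (v m))\<^sup>2)"
    using F by (intro sum_mono2) auto
  also have "\<dots> = B\<^sup>2 * (\<Sum>m\<in>F. (cmod (v m))\<^sup>2)"
    by (simp add: sum_distrib_left)
  finally show "(\<Sum>m\<in>M. (cmod (\<Sum>n\<in>F. cdiag f m n * v n))\<^sup>2) \<le> B\<^sup>2 * (\<Sum>n\<in>F. (cmod (v n))\<^sup>2)" .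
qed

lemma positive_cdiag:
  assumes "\<And>n. 0 \<le> f n"
  shows "positive_op (cdiag f)"
  unfolding positive_op_def
proof (intro allI impI)
  fix F :: "nat set" and v :: "nat \<Rightarrow> complex"
  assume F: "finite F"
  have "(\<Sum>m\<in>F. \<Sum>n\<in>F. cnj (v m) * cdiag f m n * v n) = (\<Sum>m\<in>F. complex_of_real (f m * (cmod (v m))\<^sup>2))"
  proof (rule sum.cong)
    fix m assume "m \<in> F"
    have "(\<Sum>n\<in>F. cnj (v m) * cdiag f m n * v n) = (\<Sum>n\<in>F. if n = m then cnj (v m) * complex_of_real (f m) * v m else 0)"
      by (intro sum.cong) (auto simp: cdiag_def)
    also have "\<dots> = cnj (v m) * complex_of_real (f m) * v m" using F \<open>m \<in> F\<close> by simp
    also have "\<dots> = complex_of_real (f m * (cmod (v m))\<^sup>2)"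
    proof -
      have "cnj (v m) * complex_of_real (f m) * v m = complex_of_real (f m) * (v m * cnj (v m))"
        by (simp add: ac_simps)
      then show ?thesis by (simp only: complex_mult_cnj of_real_mult cmod_power2)
    qed
    finally show "(\<Sum>n\<in>F. cnj (v m) * cdiag f m n * v n) = complex_of_real (f m * (cmod (v m))\<^sup>2)" .
  qed simp
  also have "\<dots> = complex_of_real (\<Sum>m\<in>F. f m * (cmod (v m))\<^sup>2)" by simp
  finally show "Im (\<Sum>m\<in>F. \<Sum>n\<in>F. cnj (v m) * cdiag f m n * v n) = 0 \<and>
      0 \<le> Re (\<Sum>m\<in>F. \<Sum>n\<in>F. cnj (v m) * cdiag f m n * v n)"
    using assms by (simp add: sum_nonneg)
qed

definition qf :: "fop \<Rightarrow> nat set \<Rightarrow> (nat \<Rightarrow> complex) \<Rightarrow> complex" where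
  "qf S F v = (\<Sum>m\<in>F. \<Sum>n\<in>F. cnj (v m) * S m n * v n)"

lemma qf_pos: "positive_op S \<Longrightarrow> finite F \<Longrightarrow> Im (qf S F v) = 0 \<and> 0 \<le> Re (qf S F v)"
  unfolding positive_op_def qf_def by blast

lemma qf_single: "qf S {m} (\<lambda>_. 1) = S m m"
  by (simp add: qf_def)

lemma qf_two: "m \<noteq> n \<Longrightarrow> qf S {m, n} (\<lambda>k. if k = m then 1 else c) =
   S m m + S m n * c + cnj c * S n m + cnj c * S n n * c"
  by (simp add: qf_def)

lemma pos_diag: assumes "positive_op S" shows "Im (S m m) = 0" "0 \<le> Re (S m m)"
  using qf_pos[OF assms, of "{m}" "\<lambda>_. 1"] by (simp_all add: qf_single)

lemma pos_herm: assumes "positive_op S" shows "S m n = cnj (S n m)"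
proof (cases "m = n")
  case True
  then show ?thesis using pos_diag[OF assms, of m] by (simp add: complex_eq_iff)
next
  case False
  have d1: "Im (S m m) = 0" "Im (S n n) = 0" using pos_diag[OF assms] by auto
  have "Im (qf S {m, n} (\<lambda>k. if k = m then 1 else 1)) = 0"
    using qf_pos[OF assms] by simp
  then have a: "Im (S m n) + Im (S n m) = 0"
    using qf_two[OF False, of S 1] d1 by simp
  have "Im (qf S {m, n} (\<lambda>k. if k = m then 1 else \<i>)) = 0"
    using qf_pos[OF assms] by simp
  then have b: "Re (S m n) - Re (S n m) = 0"
    using qf_two[OF False, of S \<i>] d1 by simp
  show ?thesis using a b by (simp add: complex_eq_iff)
qed

lemma bounded_col_summable:
  assumes "bounded_op S" shows "summable (\<lambda>k. (cmod (S k n))\<^sup>2)"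
proof -
  obtain C where C: "\<And>F M (v::nat \<Rightarrow> complex). finite F \<Longrightarrow> finite M \<Longrightarrow>
      (\<Sum>m\<in>M. (cmod (\<Sum>n\<in>F. S m n * v n))\<^sup>2) \<le> C * (\<Sum>n\<in>F. (cmod (v n))\<^sup>2)"
    using assms unfolding bounded_op_def by blast
  show ?thesis
  proof (rule summableI_nonneg_bounded)
    fix N
    show "(\<Sum>k<N. (cmod (S k n))\<^sup>2) \<le> C"
      using C[of "{n}" "{..<N}" "\<lambda>_. 1"] by simp
  qed simp
qed

lemma sqrt_unique:
  fixes d :: "nat \<Rightarrow> real"
  assumes ij: "i \<noteq> j" and d0: "\<And>n. 0 \<le> d n" and dz: "\<And>n. n \<noteq> i \<Longrightarrow> n \<noteq> j \<Longrightarrow> d n = 0"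
    and bS: "bounded_op S" and pS: "positive_op S" and sq: "mmult S S = cdiag d"
  shows "S = cdiag (\<lambda>n. sqrt (d n))"
proof -
  have herm: "\<And>m n. S m n = cnj (S n m)" using pos_herm[OF pS] by blast
  have rs: "summable (\<lambda>k. (cmod (S n k))\<^sup>2)" for n
  proof -
    have "(\<lambda>k. (cmod (S n k))\<^sup>2) = (\<lambda>k. (cmod (S k n))\<^sup>2)"
      by (subst herm) simp
    then show ?thesis using bounded_col_summable[OF bS] by simp
  qed
  have dn: "d n = (\<Sum>k. (cmod (S n k))\<^sup>2)" for n
  proof -
    have "complex_of_real (d n) = mmult S S n n" using sq by (simp add: cdiag_def)
    also have "\<dots> = (\<Sum>k. complex_of_real ((cmod (S n k))\<^sup>2))"
      unfolding mmult_def
    proof (rule arg_cong[where f=suminf], rule ext)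
      fix k
      have "S n k * S k n = S n k * cnj (S n k)" using herm[of k n] by simp
      then show "S n k * S k n = complex_of_real ((cmod (S n k))\<^sup>2)"
        by (simp only: complex_mult_cnj cmod_power2)
    qed
    also have "\<dots> = complex_of_real (\<Sum>k. (cmod (S n k))\<^sup>2)"
      by (rule suminf_of_real[OF rs, symmetric])
    finally show ?thesis by simp
  qed
  have zero_row: "S n k = 0" if "n \<noteq> i" "n \<noteq> j" for n k
  proof -
    have "(\<Sum>k. (cmod (S n k))\<^sup>2) = 0" using dn[of n] dz[OF that] by simp
    then have "\<forall>k. (cmod (S n k))\<^sup>2 = 0" using suminf_eq_zero_iff[OF rs] by simp
    then show ?thesis by simp
  qed
  have zero_col: "S k n = 0" if "n \<noteq> i" "n \<noteq> j" for n k
    using zero_row[OF that, of k] herm[of k n] by simp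
  have fin: "(\<Sum>k. f k) = f i + f j" if "\<And>k. k \<noteq> i \<Longrightarrow> k \<noteq> j \<Longrightarrow> f k = 0" for f :: "nat \<Rightarrow> 'a::{comm_monoid_add,t2_space}"
  proof -
    have "(\<Sum>k. f k) = sum f {i, j}" by (rule suminf_finite) (use that in auto)
    then show ?thesis using ij by simp
  qed
  have di: "d i = (cmod (S i i))\<^sup>2 + (cmod (S i j))\<^sup>2"
    using dn[of i] fin[of "\<lambda>k. (cmod (S i k))\<^sup>2"] zero_col by simp
  have dj: "d j = (cmod (S j i))\<^sup>2 + (cmod (S j j))\<^sup>2"
    using dn[of j] fin[of "\<lambda>k. (cmod (S j k))\<^sup>2"] zero_col by simp
  have off: "S i i * S i j + S i j * S j j = 0"
  proof -
    have "0 = mmult S S i j" using sq ij by (simp add: cdiag_def)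
    also have "\<dots> = S i i * S i j + S i j * S j j"
      unfolding mmult_def using fin[of "\<lambda>k. S i k * S k j"] zero_col by simp
    finally show ?thesis by simp
  qed
  have Sii: "S i i = complex_of_real (Re (S i i))" "0 \<le> Re (S i i)"
    using pos_diag[OF pS, of i] by (simp_all add: complex_eq_iff)
  have Sjj: "S j j = complex_of_real (Re (S j j))" "0 \<le> Re (S j j)"
    using pos_diag[OF pS, of j] by (simp_all add: complex_eq_iff)
  have Sij: "S i j = 0"
  proof (rule ccontr)
    assume nz: "S i j \<noteq> 0"
    from off have "S i j * (S i i + S j j) = 0" by (simp add: algebra_simps)
    with nz have "S i i + S j j = 0" by simp
    then have "Re (S i i) + Re (S j j) = 0" by (metis plus_complex.sel(1) zero_complex.sel(1))
    then have z: "S i i = 0" "S j j = 0" using Sii Sjj by (metis add_nonneg_eq_0_iff of_real_0)+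
    define c where "c = - cnj (S i j)"
    have "qf S {i, j} (\<lambda>k. if k = i then 1 else c) = S i j * c + cnj c * S j i"
      using qf_two[OF ij, of S c] z by simp
    also have "\<dots> = - 2 * complex_of_real ((cmod (S i j))\<^sup>2)"
      using herm[of j i] unfolding c_def
      by (simp add: complex_mult_cnj cmod_power2 algebra_simps)
    finally have "Re (qf S {i, j} (\<lambda>k. if k = i then 1 else c)) = - 2 * (cmod (S i j))\<^sup>2" by simp
    moreover have "0 \<le> Re (qf S {i, j} (\<lambda>k. if k = i then 1 else c))" using qf_pos[OF pS] by simp
    moreover have "0 < cmod (S i j)" using nz by simp
    ultimately show False by simp
  qed
  have Sji: "S j i = 0" using Sij herm[of j i] by simp
  have ci: "cmod (S i i) = Re (S i i)" using Sii by (metis abs_of_nonneg norm_of_real)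
  have cj: "cmod (S j j) = Re (S j j)" using Sjj by (metis abs_of_nonneg norm_of_real)
  have ri: "Re (S i i) = sqrt (d i)" using di Sij Sii ci by (simp add: real_sqrt_unique)
  have rj: "Re (S j j) = sqrt (d j)" using dj Sji Sjj cj by (simp add: real_sqrt_unique)
  show ?thesis
  proof (intro ext)
    fix m n
    show "S m n = cdiag (\<lambda>n. sqrt (d n)) m n"
    proof (cases "m \<in> {i, j} \<and> n \<in> {i, j}")
      case True
      then show ?thesis using Sij Sji ri rj Sii(1) Sjj(1) ij by (auto simp: cdiag_def)
    next
      case False
      then have "S m n = 0" using zero_row zero_col by blast
      moreover have "m = n \<Longrightarrow> d n = 0" using False dz by auto
      ultimately show ?thesis by (auto simp: cdiag_def)
    qed
  qed
qed

lemma op_sqrt_cdiag: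
  fixes d :: "nat \<Rightarrow> real"
  assumes ij: "i \<noteq> j" and d0: "\<And>n. 0 \<le> d n" and dz: "\<And>n. n \<noteq> i \<Longrightarrow> n \<noteq> j \<Longrightarrow> d n = 0"
  shows "op_sqrt (cdiag d) = cdiag (\<lambda>n. sqrt (d n))"
  unfolding op_sqrt_def
proof (rule the_equality)
  have "\<bar>sqrt (d n)\<bar> \<le> sqrt (d i) + sqrt (d j)" for n
    using dz[of n] d0[of i] d0[of j] by (cases "n = i"; cases "n = j") auto
  then show "bounded_op (cdiag (\<lambda>n. sqrt (d n))) \<and> positive_op (cdiag (\<lambda>n. sqrt (d n))) \<and>
    mmult (cdiag (\<lambda>n. sqrt (d n))) (cdiag (\<lambda>n. sqrt (d n))) = cdiag d"
  proof (intro conjI)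
    show "bounded_op (cdiag (\<lambda>n. sqrt (d n)))" by (rule bounded_cdiag) fact
    show "positive_op (cdiag (\<lambda>n. sqrt (d n)))" by (rule positive_cdiag) (simp add: d0)
    show "mmult (cdiag (\<lambda>n. sqrt (d n))) (cdiag (\<lambda>n. sqrt (d n))) = cdiag d"
      unfolding mmult_cdiag using d0 by (auto simp: cdiag_def fun_eq_iff simp flip: of_real_mult)
  qed
next
  fix S assume "bounded_op S \<and> positive_op S \<and> mmult S S = cdiag d"
  then show "S = cdiag (\<lambda>n. sqrt (d n))" using sqrt_unique[of i j d S] ij d0 dz by blast
qed

lemma exp_mH_cdiag: "exp_mH g = cdiag (\<lambda>n. exp (- g * real n))"
  by (simp only: exp_mH_def cdiag_def)

lemma ann_sub_cdiag: "mmult (mmult ann (cdiag r)) cre = cdiag (\<lambda>n. real (Suc n) * r (Suc n))"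
  unfolding mmult_cdiag mmult_cre
  by (auto simp: fun_eq_iff ann_def cdiag_def simp flip: of_real_mult)

lemma approx_cdiag: "approx_sub g (cdiag r) = cdiag (\<lambda>n. (exp (2 * g) - 1) *
    (real (Suc n) * r (Suc n) * (exp (- g * real (Suc n)) * exp (- g * real (Suc n)))))"
proof -
  have sq: "sqrt (1 + real x) * a * b * c * sqrt (1 + real x) = (1 + real x) * (b * (a * c))" for x :: nat and a b c
  proof -
    have "sqrt (1 + real x) * sqrt (1 + real x) = 1 + real x" by simp
    then show ?thesis by (metis mult.commute mult.left_commute)
  qed
  have c: "complex_of_real (exp (2 * g)) - 1 = complex_of_real (exp (2 * g) - 1)" by simp
  show ?thesis
    unfolding approx_sub_def exp_mH_cdiag mmult_cdiag mmult_cre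
    by (auto simp: fun_eq_iff ann_def cdiag_def op_scale_def sq simp flip: of_real_mult)
      (simp add: c mult.assoc del: of_real_diff flip: of_real_mult)
qed

lemma trace_cdiag2: assumes "i \<noteq> j" "\<And>n. n \<noteq> i \<Longrightarrow> n \<noteq> j \<Longrightarrow> f n = 0"
  shows "op_trace (cdiag f) = complex_of_real (f i + f j)"
proof -
  have "op_trace (cdiag f) = (\<Sum>n\<in>{i, j}. cdiag f n n)"
    unfolding op_trace_def by (rule suminf_finite) (use assms in \<open>auto simp: cdiag_def\<close>)
  then show ?thesis using assms by (simp add: cdiag_def)
qed

lemma scale_cdiag: "op_scale (1 / complex_of_real t) (cdiag f) = cdiag (\<lambda>n. f n / t)"
  by (auto simp: fun_eq_iff op_scale_def cdiag_def)

lemma diff_cdiag: "op_diff (cdiag a) (cdiag b) = cdiag (\<lambda>n. a n - b n)"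
  by (auto simp: fun_eq_iff op_diff_def cdiag_def)

lemma trace_norm_cdiag:
  assumes ij: "i \<noteq> j" and fz: "\<And>n. n \<noteq> i \<Longrightarrow> n \<noteq> j \<Longrightarrow> f n = 0"
  shows "trace_norm (cdiag f) = ennreal (\<bar>f i\<bar> + \<bar>f j\<bar>)"
proof -
  have a: "adj (cdiag f) = cdiag f" by (auto simp: fun_eq_iff adj_def cdiag_def)
  have m: "mmult (cdiag f) (cdiag f) = cdiag (\<lambda>n. (f n)\<^sup>2)"
    unfolding mmult_cdiag by (auto simp: fun_eq_iff cdiag_def power2_eq_square)
  have s: "op_sqrt (cdiag (\<lambda>n. (f n)\<^sup>2)) = cdiag (\<lambda>n. sqrt ((f n)\<^sup>2))"
    by (rule op_sqrt_cdiag[OF ij]) (use fz in auto)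
  have "trace_norm (cdiag f) = (\<Sum>n. ennreal \<bar>f n\<bar>)"
    unfolding trace_norm_def a m s by (simp add: cdiag_def)
  also have "\<dots> = (\<Sum>n\<in>{i,j}. ennreal \<bar>f n\<bar>)"
    by (rule suminf_finite) (use fz in auto)
  also have "\<dots> = ennreal (\<bar>f i\<bar> + \<bar>f j\<bar>)" using ij by (simp add: ennreal_plus)
  finally show ?thesis .
qed

lemma final_arith:
  fixes a c A B :: real
  assumes a: "0 < a" and c: "0 < c" and A: "0 < A" and B: "0 < B" and AB: "9 * B \<le> A"
  shows "1 \<le> \<bar>a / (a + 3 * a) - c * (a * A) / (c * (a * A) + c * (3 * a * B))\<bar>
           + \<bar>3 * a / (a + 3 * a) - c * (3 * a * B) / (c * (a * A) + c * (3 * a * B))\<bar>"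
proof -
  define y where "y = A / (A + 3 * B)"
  have e1: "a / (a + 3 * a) = 1 / 4" using a by (simp add: field_simps)
  have e2: "3 * a / (a + 3 * a) = 3 / 4" using a by (simp add: field_simps)
  have ca: "c * a \<noteq> 0" using a c by simp
  have den: "c * (a * A) + c * (3 * a * B) = (c * a) * (A + 3 * B)" by (simp add: algebra_simps)
  have n1: "c * (a * A) = (c * a) * A" by simp
  have n2: "c * (3 * a * B) = (c * a) * (3 * B)" by simp
  have e3: "c * (a * A) / (c * (a * A) + c * (3 * a * B)) = y"
    unfolding y_def den by (subst n1) (rule nonzero_mult_divide_mult_cancel_left[OF ca])
  have e4: "c * (3 * a * B) / (c * (a * A) + c * (3 * a * B)) = 1 - y"
  proof -
    have "c * (3 * a * B) / (c * (a * A) + c * (3 * a * B)) = 3 * B / (A + 3 * B)"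
      unfolding den by (subst n2) (rule nonzero_mult_divide_mult_cancel_left[OF ca])
    also have "\<dots> = 1 - y" unfolding y_def using A B by (simp add: field_simps)
    finally show ?thesis .
  qed
  have y: "3 / 4 \<le> y" unfolding y_def using A B AB by (simp add: field_simps)
  show ?thesis unfolding e1 e2 e3 e4 using y by simp
qed

theorem proposition4:
  fixes \<gamma> E :: real
  assumes "\<gamma> > 0" and "E > 0"
  shows "\<exists>\<rho>. density_op \<rho> \<and> summable (\<lambda>n. real n ^ 2 * Re (\<rho> n n)) \<and>
           0 < tr_H_pow \<rho> 2 \<and> tr_H_pow \<rho> 2 \<le> E \<and>
           trace_norm (op_diff (photon_sub \<rho>)
              (op_scale (1 / op_trace (approx_sub \<gamma> \<rho>)) (approx_sub \<gamma> \<rho>))) \<ge> 1"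
proof -
  have g: "0 < \<gamma>" and E: "0 < E" using assms by auto
  obtain n0 :: nat where n0: "ln 9 / (2 * \<gamma>) < real n0" using reals_Archimedean2 by blast
  define M where "M = Suc n0"
  have M1: "M \<noteq> 0" unfolding M_def by simp
  have lnM: "ln 9 < 2 * \<gamma> * real M"
  proof -
    have "ln 9 / (2 * \<gamma>) < real M" using n0 unfolding M_def by simp
    then show ?thesis using g by (simp add: field_simps)
  qed
  have xM: "9 * exp (- 2 * \<gamma> * real M) \<le> 1"
  proof -
    have "exp (- 2 * \<gamma> * real M) \<le> exp (- ln 9)" using lnM by simp
    also have "exp (- ln (9::real)) = 1 / 9" by (simp add: exp_minus)
    finally show ?thesis by simp
  qed
  define s where "s = min E 1 / (real M + 2)"
  have s0: "0 < s" unfolding s_def using E by simp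
  have sle: "s * (real M + 2) = min E 1" unfolding s_def by simp
  have s1: "s \<le> 1 / 2"
  proof -
    have "s * 2 \<le> s * (real M + 2)" using s0 by simp
    then show ?thesis using sle by linarith
  qed
  define p1 where "p1 = s / 4"
  define pN where "pN = 3 * s / (4 * (real M + 1))"
  have pN0: "0 < pN" unfolding pN_def using s0 by simp
  have pNle: "pN \<le> 3 * s / 4" unfolding pN_def using s0 by (simp add: field_simps)
  have MpN: "real (Suc M) * pN = 3 * s / 4" unfolding pN_def by (simp add: field_simps)
  define r where "r n = (if n = 0 then 1 - p1 - pN else if n = 1 then p1 else if n = Suc M then pN else 0)" for n
  have rz: "r n = 0" if "n \<noteq> 0" "n \<noteq> 1" "n \<noteq> Suc M" for n using that unfolding r_def by simp
  have r0: "r 0 = 1 - p1 - pN" and r1: "r 1 = p1" and rM: "r (Suc M) = pN"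
    unfolding r_def using M1 by auto
  have rnn: "0 \<le> r n" and rle: "\<bar>r n\<bar> \<le> 1" for n
    unfolding r_def p1_def using s0 s1 pN0 pNle by auto
  define \<rho> where "\<rho> = cdiag r"
  have fin3: "finite {0, 1, Suc M}" by simp
  have sum3: "(\<Sum>n\<in>{0, 1, Suc M}. f n) = f 0 + f 1 + f (Suc M)" for f :: "nat \<Rightarrow> 'a::comm_monoid_add"
    using M1 by (simp add: add.assoc)
  have Rediag: "Re (\<rho> n n) = r n" for n unfolding \<rho>_def cdiag_def by simp
  have dens: "density_op \<rho>"
    unfolding density_op_def
  proof (intro conjI)
    show "bounded_op \<rho>" unfolding \<rho>_def by (rule bounded_cdiag[OF rle])
    show "positive_op \<rho>" unfolding \<rho>_def by (rule positive_cdiag[OF rnn])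
    show "summable (\<lambda>n. Re (\<rho> n n))" unfolding Rediag
      by (rule summable_finite[OF fin3]) (use rz in auto)
    have "op_trace \<rho> = (\<Sum>n\<in>{0, 1, Suc M}. \<rho> n n)"
      unfolding op_trace_def by (rule suminf_finite[OF fin3]) (use rz in \<open>auto simp: \<rho>_def cdiag_def\<close>)
    also have "\<dots> = complex_of_real (r 0 + r 1 + r (Suc M))" unfolding sum3 by (simp add: \<rho>_def cdiag_def)
    also have "\<dots> = 1" unfolding r0 r1 rM by simp
    finally show "op_trace \<rho> = 1" .
  qed
  have en: "(\<Sum>n. real n ^ 2 * Re (\<rho> n n)) = (\<Sum>n\<in>{0, 1, Suc M}. real n ^ 2 * r n)"
    unfolding Rediag by (rule suminf_finite[OF fin3]) (use rz in auto)
  have ensum: "summable (\<lambda>n. real n ^ 2 * Re (\<rho> n n))" unfolding Rediag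
    by (rule summable_finite[OF fin3]) (use rz in auto)
  have trv: "tr_H_pow \<rho> 2 = s / 4 + real (Suc M) * (3 * s / 4)"
  proof -
    have "tr_H_pow \<rho> 2 = p1 + real (Suc M) * (real (Suc M) * pN)"
      unfolding tr_H_pow_def en sum3 r1 rM by (simp add: power2_eq_square)
    then show ?thesis unfolding MpN p1_def .
  qed
  have tr_pos: "0 < tr_H_pow \<rho> 2" unfolding trv using s0 by (simp add: add_pos_nonneg)
  have tr_le: "tr_H_pow \<rho> 2 \<le> E"
  proof -
    have "s / 4 + real (Suc M) * (3 * s / 4) \<le> s * (real M + 2)" using s0 by (simp add: field_simps)
    then show ?thesis unfolding trv sle by simp
  qed
  define w where "w n = real (Suc n) * r (Suc n)" for n
  have wz: "w n = 0" if "n \<noteq> 0" "n \<noteq> M" for n unfolding w_def using that rz[of "Suc n"] by simp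
  have w0: "w 0 = s / 4" using r1 unfolding w_def p1_def by simp
  have wM: "w M = 3 * s / 4" unfolding w_def rM MpN ..
  have tw: "op_trace (cdiag w) = complex_of_real (w 0 + w M)"
    by (rule trace_cdiag2) (use M1 wz in auto)
  have aw: "mmult (mmult ann \<rho>) cre = cdiag w"
    unfolding \<rho>_def ann_sub_cdiag w_def ..
  have ps: "photon_sub \<rho> = cdiag (\<lambda>n. w n / (w 0 + w M))"
    unfolding photon_sub_def aw tw by (rule scale_cdiag)
  define c where "c = exp (2 * \<gamma>) - 1"
  have c0: "0 < c" unfolding c_def using g by simp
  define ee where "ee n = exp (- \<gamma> * real (Suc n)) * exp (- \<gamma> * real (Suc n))" for n
  define v where "v n = c * (real (Suc n) * r (Suc n) * ee n)" for n
  have vz: "v n = 0" if "n \<noteq> 0" "n \<noteq> M" for n unfolding v_def using that rz[of "Suc n"] by simp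
  have ap: "approx_sub \<gamma> \<rho> = cdiag v"
    unfolding \<rho>_def approx_cdiag v_def ee_def c_def ..
  have as: "op_scale (1 / op_trace (approx_sub \<gamma> \<rho>)) (approx_sub \<gamma> \<rho>) = cdiag (\<lambda>n. v n / (v 0 + v M))"
  proof -
    have tv: "op_trace (cdiag v) = complex_of_real (v 0 + v M)"
      by (rule trace_cdiag2) (use M1 vz in auto)
    show ?thesis unfolding ap tv by (rule scale_cdiag)
  qed
  define f where "f n = w n / (w 0 + w M) - v n / (v 0 + v M)" for n
  have fz: "f n = 0" if "n \<noteq> 0" "n \<noteq> M" for n unfolding f_def using wz[OF that] vz[OF that] by simp
  have tn: "trace_norm (op_diff (photon_sub \<rho>)
              (op_scale (1 / op_trace (approx_sub \<gamma> \<rho>)) (approx_sub \<gamma> \<rho>))) = ennreal (\<bar>f 0\<bar> + \<bar>f M\<bar>)"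
  proof -
    have "op_diff (cdiag (\<lambda>n. w n / (w 0 + w M))) (cdiag (\<lambda>n. v n / (v 0 + v M))) = cdiag f"
      unfolding diff_cdiag f_def ..
    moreover have "trace_norm (cdiag f) = ennreal (\<bar>f 0\<bar> + \<bar>f M\<bar>)"
      by (rule trace_norm_cdiag) (use M1 fz in auto)
    ultimately show ?thesis unfolding ps as by simp
  qed
  have ee0: "ee 0 = exp (- 2 * \<gamma>)" unfolding ee_def by (simp add: mult_exp_exp)
  have eeM: "ee M = exp (- 2 * \<gamma>) * exp (- 2 * \<gamma> * real M)" unfolding ee_def
    by (simp add: mult_exp_exp algebra_simps)
  have A: "0 < ee 0" and B: "0 < ee M" unfolding ee_def by auto
  have AB: "9 * ee M \<le> ee 0"
  proof -
    have "exp (- 2 * \<gamma>) * (9 * exp (- 2 * \<gamma> * real M)) \<le> exp (- 2 * \<gamma>) * 1"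
      by (rule mult_left_mono[OF xM]) simp
    then show ?thesis unfolding ee0 eeM by (simp add: algebra_simps)
  qed
  have v0: "v 0 = c * (s / 4 * ee 0)" using r1 unfolding v_def p1_def by simp
  have vM: "v M = c * (3 * (s / 4) * ee M)" unfolding v_def rM MpN by simp
  have w0': "w 0 = s / 4" and wM': "w M = 3 * (s / 4)" using w0 wM by auto
  have "1 \<le> \<bar>f 0\<bar> + \<bar>f M\<bar>"
    unfolding f_def w0' wM' v0 vM
    using final_arith[of "s / 4" c "ee 0" "ee M"] s0 c0 A B AB by simp
  then have "1 \<le> ennreal (\<bar>f 0\<bar> + \<bar>f M\<bar>)" by (subst ennreal_1[symmetric]) (rule ennreal_leI)
  then show ?thesis using dens ensum tr_pos tr_le tn by auto
qed

end
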